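(* Let $\mathcal{G}$ be a class of graphs that is closed under removing edges (if $G\in\mathcal{G}$, then every graph obtained from $G$ by deleting edges, keeping all vertices, is in $\mathcal{G}$). Let $c$ be a constant, let $f(x)=cx$, and let $g$ be an arbitrary function. Suppose that every graph $G\in\mathcal{G}$ with $n$ vertices and $m$ edges satisfies $cr(G)\geq f(m)-g(n)$. Then for every positive integer $k$, every graph $G\in\mathcal{G}$ with $n$ vertices and $m$ edges satisfies $$cr_k(G)\geq f(m)-k\cdot g(n).$$
   Context: $cr(G)$ denotes the minimum number of edge crossings over all (simple) drawings of $G$ in the plane, where in a simple drawing no two edges cross more than once and no three edges cross at a point. For a positive integer $k$, the $k$-planar crossing number $cr_k(G)$ of $G=(V,E)$ is the minimum of $cr(G_1)+\cdots+cr(G_k)$ over all decompositions of $G$ into $k$ subgraphs $G_i=(V,E_i)$ with $E=E_1\cup\dots\cup E_k$ and the $E_i$ pairwise disjoint. *)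

theory Defs
  imports "HOL-Analysis.Analysis"
begin

definition simple_graph :: "'a set \<Rightarrow> 'a set set \<Rightarrow> bool" where
  "simple_graph V E \<longleftrightarrow> finite V \<and>
     (\<forall>e\<in>E. \<exists>u v. e = {u, v} \<and> u \<noteq> v \<and> u \<in> V \<and> v \<in> V)"

definition edge_interior :: "('a \<Rightarrow> complex) \<Rightarrow> ('a set \<Rightarrow> real \<Rightarrow> complex) \<Rightarrow> 'a set \<Rightarrow> complex set" where
  "edge_interior pos D e = path_image (D e) - pos ` e"

text \<open>A simple drawing of (V,E) in the plane (identified with complex): vertices are
  distinct points, edges are arcs between the images of their endpoints passing through no
  other vertex; any two edges share at most one interior point (cross at most once) and no
  three edges share an interior point.\<close>
definition simple_drawing :: "'a set \<Rightarrow> 'a set set \<Rightarrow> ('a \<Rightarrow> complex) \<Rightarrow> ('a set \<Rightarrow> real \<Rightarrow> complex) \<Rightarrow> bool" where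
  "simple_drawing V E pos D \<longleftrightarrow>
     inj_on pos V \<and>
     (\<forall>e\<in>E. \<exists>u v. e = {u, v} \<and> arc (D e) \<and> pathstart (D e) = pos u \<and> pathfinish (D e) = pos v
                 \<and> path_image (D e) \<inter> pos ` V = {pos u, pos v}) \<and>
     (\<forall>e\<in>E. \<forall>e'\<in>E. e \<noteq> e' \<longrightarrow>
         finite (edge_interior pos D e \<inter> edge_interior pos D e') \<and>
         card (edge_interior pos D e \<inter> edge_interior pos D e') \<le> 1) \<and>
     (\<forall>e\<in>E. \<forall>e'\<in>E. \<forall>e''\<in>E. e \<noteq> e' \<and> e \<noteq> e'' \<and> e' \<noteq> e'' \<longrightarrow>
         edge_interior pos D e \<inter> edge_interior pos D e' \<inter> edge_interior pos D e'' = {})"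

definition crossings :: "'a set set \<Rightarrow> ('a \<Rightarrow> complex) \<Rightarrow> ('a set \<Rightarrow> real \<Rightarrow> complex) \<Rightarrow> nat" where
  "crossings E pos D = card {({e, e'}, p) | e e' p. e \<in> E \<and> e' \<in> E \<and> e \<noteq> e' \<and>
       p \<in> edge_interior pos D e \<inter> edge_interior pos D e'}"

definition cr :: "'a set \<Rightarrow> 'a set set \<Rightarrow> nat" where
  "cr V E = (LEAST n. \<exists>pos D. simple_drawing V E pos D \<and> crossings E pos D = n)"

text \<open>k-planar crossing number: minimum over decompositions E = E_0 \<union> ... \<union> E_(k-1)
  (pairwise disjoint, given by an assignment of each edge to an index < k).\<close>
definition cr_k :: "nat \<Rightarrow> 'a set \<Rightarrow> 'a set set \<Rightarrow> nat" where
  "cr_k k V E = (LEAST n. \<exists>part :: 'a set \<Rightarrow> nat. (\<forall>e\<in>E. part e < k) \<and>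
       n = (\<Sum>i<k. cr V {e\<in>E. part e = i}))"

end

theory Submission
  imports Defs
begin

theorem lemma2:
  fixes \<G> :: "('a set \<times> 'a set set) set" and c :: real and g :: "nat \<Rightarrow> real" and k :: nat
  assumes graphs: "\<forall>V E. (V, E) \<in> \<G> \<longrightarrow> simple_graph V E"
    and closed: "\<forall>V E E'. (V, E) \<in> \<G> \<longrightarrow> E' \<subseteq> E \<longrightarrow> (V, E') \<in> \<G>"
    and hyp: "\<forall>V E. (V, E) \<in> \<G> \<longrightarrow> real (cr V E) \<ge> c * real (card E) - g (card V)"
    and kpos: "k > 0"
  shows "\<forall>V E. (V, E) \<in> \<G> \<longrightarrow>
           real (cr_k k V E) \<ge> c * real (card E) - real k * g (card V)"
proof (intro allI impI)
  fix V E assume G: "(V, E) \<in> \<G>"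
  have sg: "simple_graph V E" using graphs G by blast
  have "E \<subseteq> Pow V"
  proof
    fix e assume "e \<in> E"
    then obtain u v where "e = {u, v}" "u \<in> V" "v \<in> V"
      using sg unfolding simple_graph_def by meson
    thus "e \<in> Pow V" by simp
  qed
  moreover have "finite V" using sg unfolding simple_graph_def by simp
  ultimately have finE: "finite E" by (meson finite_Pow_iff finite_subset)
  let ?P = "\<lambda>n. \<exists>part :: 'a set \<Rightarrow> nat. (\<forall>e\<in>E. part e < k) \<and>
       n = (\<Sum>i<k. cr V {e\<in>E. part e = i})"
  have "?P (\<Sum>i<k. cr V {e\<in>E. (\<lambda>_. 0::nat) e = i})"
    by (rule exI[where x="\<lambda>_. 0::nat"]) (simp add: kpos)
  hence "?P (Least ?P)" by (rule LeastI)
  then obtain part where pk: "\<forall>e\<in>E. part e < k"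
    and eq: "cr_k k V E = (\<Sum>i<k. cr V {e\<in>E. part e = i})"
    unfolding cr_k_def by blast
  have Eun: "E = (\<Union>i<k. {e\<in>E. part e = i})" using pk by blast
  have cardE: "card E = (\<Sum>i<k. card {e\<in>E. part e = i})"
  proof -
    have "card (\<Union>i<k. {e\<in>E. part e = i}) = (\<Sum>i<k. card {e\<in>E. part e = i})"
      by (rule card_UN_disjoint) (use finE in auto)
    thus ?thesis using Eun[symmetric] by simp
  qed
  have each: "real (cr V {e\<in>E. part e = i}) \<ge> c * real (card {e\<in>E. part e = i}) - g (card V)" for i
  proof -
    have "(V, {e\<in>E. part e = i}) \<in> \<G>" by (rule closed[rule_format, OF G]) blast
    thus ?thesis using hyp by simp
  qed
  have "c * real (card E) - real k * g (card V)
      = (\<Sum>i<k. c * real (card {e\<in>E. part e = i}) - g (card V))"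
  proof -
    have "(\<Sum>i<k. c * real (card {e\<in>E. part e = i}) - g (card V))
        = c * real (\<Sum>i<k. card {e\<in>E. part e = i}) - real k * g (card V)"
      by (simp add: sum_subtractf sum_distrib_left)
    thus ?thesis by (simp only: cardE[symmetric])
  qed
  also have "\<dots> \<le> (\<Sum>i<k. real (cr V {e\<in>E. part e = i}))"
    by (rule sum_mono) (rule each)
  also have "\<dots> = real (cr_k k V E)" using eq by simp
  finally show "real (cr_k k V E) \<ge> c * real (card E) - real k * g (card V)" .
qed

end
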